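(* Let $s\in\{0,\tfrac12\}$, $\lambda\in\mathbb{C}$ and $\sigma\in\mathrm{Aut}(\mathfrak{L}^s_\lambda)$. Then there exist $\tau\in\mathfrak{I}$, $\epsilon\in\{1,-1\}$, $\alpha,\mu\in\mathbb{C}\setminus\{0\}$ and $\beta\in\mathbb{C}$ such that for all $m\in\mathbb{Z}$, $$(\sigma\tau)(L_m)=\epsilon\alpha^mL_{\epsilon m}+m\alpha^m\beta\, I_{\epsilon m},\qquad (\sigma\tau)(I_m)=\alpha^m\mu\, I_{\epsilon m}.$$
   Context: For $s\in\{0,\tfrac12\}$ and $\lambda\in\mathbb{C}$, $\mathfrak{L}^s_\lambda$ is the complex Lie superalgebra with basis $\{L_m,I_m,G_p,H_p : m\in\mathbb{Z},\ p\in s+\mathbb{Z}\}$, even part spanned by the $L_m,I_m$, odd part spanned by the $G_p,H_p$, with brackets $[L_m,L_n]=(m-n)L_{m+n}$, $[L_m,I_n]=(m-n)I_{m+n}$, $[L_m,H_p]=(\tfrac m2-p)H_{m+p}$, $[L_m,G_p]=(\tfrac m2-p)G_{m+p}+\lambda(m+1)H_{m+p}$, $[I_m,G_p]=(m-2p)H_{m+p}$, $[G_p,G_q]=I_{p+q}$, plus super-antisymmetry; all other brackets of basis elements are zero. $\mathrm{Aut}(\mathfrak{L})$ is the group of bijective parity-preserving linear maps $\sigma$ with $\sigma([x,y])=[\sigma(x),\sigma(y)]$. $\mathfrak{I}$ is the subgroup of $\mathrm{Aut}(\mathfrak{L})$ generated by the maps $\exp(\alpha\,\mathrm{ad}\,I_k)=\mathrm{id}+\alpha\,\mathrm{ad}\,I_k$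 ($\alpha\in\mathbb{C}$, $k\in\mathbb{Z}$), where $\mathrm{ad}\,x(y)=[x,y]$. *)

theory Defs
  imports Complex_Main
begin

text \<open>Basis of the Lie superalgebra L^s_lambda.  Lb m = L_m, Ib m = I_m,
  Gb k = G_(k+s), Hb k = H_(k+s)  (k integer, so p = k + s ranges over s + Z).\<close>

datatype sbasis = Lb int | Ib int | Gb int | Hb int

type_synonym svec = "sbasis \<Rightarrow> complex"

definition bvec :: "sbasis \<Rightarrow> svec" where
  "bvec b = (\<lambda>c. if c = b then 1 else 0)"

definition smul :: "complex \<Rightarrow> svec \<Rightarrow> svec" where
  "smul a x = (\<lambda>b. a * x b)"

definition supp :: "svec \<Rightarrow> sbasis set" where
  "supp x = {b. x b \<noteq> 0}"

definition Vsp :: "svec set" where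
  "Vsp = {x. finite (supp x)}"

definition is_even_b :: "sbasis \<Rightarrow> bool" where
  "is_even_b b = (case b of Lb _ \<Rightarrow> True | Ib _ \<Rightarrow> True | _ \<Rightarrow> False)"

definition Veven :: "svec set" where
  "Veven = {x \<in> Vsp. \<forall>b\<in>supp x. is_even_b b}"

definition Vodd :: "svec set" where
  "Vodd = {x \<in> Vsp. \<forall>b\<in>supp x. \<not> is_even_b b}"

text \<open>2s as an integer (s = 0 or s = 1/2).\<close>
definition twos :: "complex \<Rightarrow> int" where
  "twos s = (if s = 0 then 0 else 1)"

fun br :: "complex \<Rightarrow> complex \<Rightarrow> sbasis \<Rightarrow> sbasis \<Rightarrow> svec" where
  "br s lam (Lb m) (Lb n) = smul (of_int (m - n)) (bvec (Lb (m + n)))"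
| "br s lam (Lb m) (Ib n) = smul (of_int (m - n)) (bvec (Ib (m + n)))"
| "br s lam (Ib n) (Lb m) = smul (- of_int (m - n)) (bvec (Ib (m + n)))"
| "br s lam (Lb m) (Hb k) = smul (of_int m / 2 - (of_int k + s)) (bvec (Hb (m + k)))"
| "br s lam (Hb k) (Lb m) = smul (- (of_int m / 2 - (of_int k + s))) (bvec (Hb (m + k)))"
| "br s lam (Lb m) (Gb k) =
     (\<lambda>c. smul (of_int m / 2 - (of_int k + s)) (bvec (Gb (m + k))) c
         + smul (lam * of_int (m + 1)) (bvec (Hb (m + k))) c)"
| "br s lam (Gb k) (Lb m) =
     (\<lambda>c. - (smul (of_int m / 2 - (of_int k + s)) (bvec (Gb (m + k))) c
         + smul (lam * of_int (m + 1)) (bvec (Hb (m + k))) c))"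
| "br s lam (Ib m) (Gb k) = smul (of_int m - 2 * (of_int k + s)) (bvec (Hb (m + k)))"
| "br s lam (Gb k) (Ib m) = smul (- (of_int m - 2 * (of_int k + s))) (bvec (Hb (m + k)))"
| "br s lam (Gb k) (Gb l) = bvec (Ib (k + l + twos s))"
| "br s lam _ _ = (\<lambda>c. 0)"

definition bracket :: "complex \<Rightarrow> complex \<Rightarrow> svec \<Rightarrow> svec \<Rightarrow> svec" where
  "bracket s lam x y =
     (\<lambda>d. \<Sum>b\<in>supp x. \<Sum>c\<in>supp y. x b * y c * br s lam b c d)"

definition is_aut :: "complex \<Rightarrow> complex \<Rightarrow> (svec \<Rightarrow> svec) \<Rightarrow> bool" where
  "is_aut s lam \<sigma> \<longleftrightarrow>
     bij_betw \<sigma> Vsp Vsp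
   \<and> (\<forall>x\<in>Vsp. \<forall>y\<in>Vsp. \<forall>a b. \<sigma> (\<lambda>d. a * x d + b * y d) = (\<lambda>d. a * \<sigma> x d + b * \<sigma> y d))
   \<and> \<sigma> ` Veven \<subseteq> Veven \<and> \<sigma> ` Vodd \<subseteq> Vodd
   \<and> (\<forall>x\<in>Vsp. \<forall>y\<in>Vsp. \<sigma> (bracket s lam x y) = bracket s lam (\<sigma> x) (\<sigma> y))"

definition expI :: "complex \<Rightarrow> complex \<Rightarrow> complex \<Rightarrow> int \<Rightarrow> svec \<Rightarrow> svec" where
  "expI s lam \<alpha> k x = (\<lambda>d. x d + \<alpha> * bracket s lam (bvec (Ib k)) x d)"

text \<open>The group generated by the exp(alpha ad I_k) (inverses taken on the algebra).\<close>
inductive_set Igrp :: "complex \<Rightarrow> complex \<Rightarrow> (svec \<Rightarrow> svec) set" for s lam where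
  gen: "expI s lam \<alpha> k \<in> Igrp s lam"
| ident: "id \<in> Igrp s lam"
| comp: "\<tau>1 \<in> Igrp s lam \<Longrightarrow> \<tau>2 \<in> Igrp s lam \<Longrightarrow> \<tau>1 \<circ> \<tau>2 \<in> Igrp s lam"
| inv: "\<tau> \<in> Igrp s lam \<Longrightarrow> inv_into Vsp \<tau> \<in> Igrp s lam"

end

theory Submission
  imports Defs
begin

lemma supp_bvec[simp]: "supp (bvec b) = {b}"
  by (auto simp: supp_def bvec_def)

lemma bvec_Vsp[simp]: "bvec b \<in> Vsp"
  by (simp add: Vsp_def)

lemma bracket_bvec: "bracket s lam (bvec b) (bvec c) = br s lam b c"
  unfolding bracket_def supp_bvec by (simp add: bvec_def)

lemma sum_restrict:
  assumes "finite A" "finite P" "\<forall>p\<in>A-P. h p = 0" "\<forall>p\<in>P-A. h p = 0"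
  shows "sum h A = sum h P"
proof -
  have "sum h A = sum h (A \<inter> P)"
    by (rule sum.mono_neutral_right) (use assms in auto)
  also have "\<dots> = sum h P"
    by (rule sum.mono_neutral_left) (use assms in auto)
  finally show ?thesis .
qed

lemma bracket_sumP:
  assumes "x \<in> Vsp" "y \<in> Vsp" "finite P"
    and "\<And>b c. (b,c) \<notin> P \<Longrightarrow> x b * y c * br s lam b c d = 0"
  shows "bracket s lam x y d = (\<Sum>p\<in>P. x (fst p) * y (snd p) * br s lam (fst p) (snd p) d)"
proof -
  have fx: "finite (supp x)" "finite (supp y)" using assms by (auto simp: Vsp_def)
  have "bracket s lam x y d = (\<Sum>b\<in>supp x. \<Sum>c\<in>supp y. x b * y c * br s lam b c d)"
    by (simp add: bracket_def)
  also have "\<dots> = (\<Sum>p\<in>supp x \<times> supp y. x (fst p) * y (snd p) * br s lam (fst p) (snd p) d)"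
    by (simp add: sum.cartesian_product case_prod_beta)
  also have "\<dots> = (\<Sum>p\<in>P. x (fst p) * y (snd p) * br s lam (fst p) (snd p) d)"
    apply (rule sum_restrict)
    using fx assms(3) apply auto[2]
    using assms(4) apply force
    by (auto simp: supp_def)
  finally show ?thesis .
qed

lemma br_L: "br s lam b c (Lb j) = (case b of Lb a \<Rightarrow> (case c of Lb a' \<Rightarrow> if a + a' = j then of_int (a - a') else 0 | _ \<Rightarrow> 0) | _ \<Rightarrow> 0)"
  by (cases b; cases c; simp add: bvec_def smul_def)

lemma br_I: "br s lam b c (Ib j) = (case b of
    Lb a \<Rightarrow> (case c of Ib a' \<Rightarrow> if a + a' = j then of_int (a - a') else 0 | _ \<Rightarrow> 0)
  | Ib a \<Rightarrow> (case c of Lb a' \<Rightarrow> if a + a' = j then of_int (a - a') else 0 | _ \<Rightarrow> 0)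
  | Gb a \<Rightarrow> (case c of Gb a' \<Rightarrow> if a + a' + twos s = j then 1 else 0 | _ \<Rightarrow> 0)
  | _ \<Rightarrow> 0)"
  by (cases b; cases c; simp add: bvec_def smul_def)

definition evenv :: "svec \<Rightarrow> bool" where
  "evenv x \<longleftrightarrow> (\<forall>k. x (Gb k) = 0 \<and> x (Hb k) = 0)"
definition oddv :: "svec \<Rightarrow> bool" where
  "oddv x \<longleftrightarrow> (\<forall>k. x (Lb k) = 0 \<and> x (Ib k) = 0)"
definition Iv :: "svec \<Rightarrow> bool" where
  "Iv x \<longleftrightarrow> (\<forall>k. x (Lb k) = 0 \<and> x (Gb k) = 0 \<and> x (Hb k) = 0)"

lemma Veven_evenv: "x \<in> Veven \<Longrightarrow> evenv x"
  unfolding Veven_def evenv_def supp_def is_even_b_def by force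
lemma Vodd_oddv: "x \<in> Vodd \<Longrightarrow> oddv x"
  unfolding Vodd_def oddv_def supp_def is_even_b_def by force

lemma lin_Vsp: "x \<in> Vsp \<Longrightarrow> y \<in> Vsp \<Longrightarrow> (\<lambda>d. a * x d + b * y d) \<in> Vsp"
proof -
  assume "x \<in> Vsp" "y \<in> Vsp"
  then have "finite (supp x \<union> supp y)" by (auto simp: Vsp_def)
  moreover have "supp (\<lambda>d. a * x d + b * y d) \<subseteq> supp x \<union> supp y" by (auto simp: supp_def)
  ultimately show ?thesis by (auto simp: Vsp_def intro: finite_subset)
qed

lemma zero_Vsp[simp]: "(\<lambda>d. 0) \<in> Vsp"
  by (simp add: Vsp_def supp_def)

lemma sum_Vsp: "finite S \<Longrightarrow> (\<forall>i\<in>S. v i \<in> Vsp) \<Longrightarrow> (\<lambda>d. \<Sum>i\<in>S. a i * v i d) \<in> Vsp"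
proof (induction S rule: finite_induct)
  case empty then show ?case by simp
next
  case (insert i S)
  have vi: "v i \<in> Vsp" and vS: "\<forall>i\<in>S. v i \<in> Vsp" using insert.prems by auto
  have "(\<lambda>d. a i * v i d + 1 * (\<Sum>i\<in>S. a i * v i d)) \<in> Vsp"
    by (rule lin_Vsp[OF vi insert.IH[OF vS]])
  moreover have "(\<lambda>d. \<Sum>i\<in>insert i S. a i * v i d) = (\<lambda>d. a i * v i d + 1 * (\<Sum>i\<in>S. a i * v i d))"
    using insert.hyps by simp
  ultimately show ?case by simp
qed

lemma decomp: "x \<in> Vsp \<Longrightarrow> x = (\<lambda>d. \<Sum>b\<in>supp x. x b * bvec b d)"
proof
  fix d assume "x \<in> Vsp"
  then have f: "finite (supp x)" by (simp add: Vsp_def)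
  show "x d = (\<Sum>b\<in>supp x. x b * bvec b d)"
  proof (cases "d \<in> supp x")
    case True
    then have "(\<Sum>b\<in>supp x. x b * bvec b d) = x d * bvec d d + (\<Sum>b\<in>supp x - {d}. x b * bvec b d)"
      using f by (simp add: sum.remove)
    also have "(\<Sum>b\<in>supp x - {d}. x b * bvec b d) = 0" by (rule sum.neutral) (auto simp: bvec_def)
    finally show ?thesis by (simp add: bvec_def)
  next
    case False
    then have "x d = 0" by (simp add: supp_def)
    moreover have "(\<Sum>b\<in>supp x. x b * bvec b d) = 0" using False by (intro sum.neutral) (auto simp: bvec_def)
    ultimately show ?thesis by simp
  qed
qed



locale autL =
  fixes s lam :: complex and \<sigma> :: "svec \<Rightarrow> svec"
  assumes aut: "is_aut s lam \<sigma>"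
begin

lemma sV: "x \<in> Vsp \<Longrightarrow> \<sigma> x \<in> Vsp"
  using aut unfolding is_aut_def bij_betw_def by auto

lemma sinj: "inj_on \<sigma> Vsp"
  using aut unfolding is_aut_def bij_betw_def by auto

lemma ssurj: "y \<in> Vsp \<Longrightarrow> \<exists>x\<in>Vsp. \<sigma> x = y"
  using aut unfolding is_aut_def bij_betw_def by (metis imageE)

lemma lin: "x \<in> Vsp \<Longrightarrow> y \<in> Vsp \<Longrightarrow> \<sigma> (\<lambda>d. a * x d + b * y d) = (\<lambda>d. a * \<sigma> x d + b * \<sigma> y d)"
  using aut unfolding is_aut_def by (drule_tac conjunct2, drule_tac conjunct1) simp

lemma hom: "x \<in> Vsp \<Longrightarrow> y \<in> Vsp \<Longrightarrow> \<sigma> (bracket s lam x y) = bracket s lam (\<sigma> x) (\<sigma> y)"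
  using aut unfolding is_aut_def by (drule_tac conjunct2, drule_tac conjunct2, drule_tac conjunct2, drule_tac conjunct2) simp

lemma seven: "x \<in> Veven \<Longrightarrow> \<sigma> x \<in> Veven"
  using aut unfolding is_aut_def by (drule_tac conjunct2, drule_tac conjunct2, drule_tac conjunct1) auto

lemma sodd: "x \<in> Vodd \<Longrightarrow> \<sigma> x \<in> Vodd"
  using aut unfolding is_aut_def by (drule_tac conjunct2, drule_tac conjunct2, drule_tac conjunct2, drule_tac conjunct1) auto

lemma szero: "\<sigma> (\<lambda>d. 0) = (\<lambda>d. 0)"
  using lin[of "\<lambda>d. 0" "\<lambda>d. 0" 0 0] by simp

lemma sscal: "x \<in> Vsp \<Longrightarrow> \<sigma> (\<lambda>d. a * x d) = (\<lambda>d. a * \<sigma> x d)"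
  using lin[of x x a 0] by simp

lemma ssum: "finite S \<Longrightarrow> (\<forall>i\<in>S. v i \<in> Vsp) \<Longrightarrow>
   \<sigma> (\<lambda>d. \<Sum>i\<in>S. a i * v i d) = (\<lambda>d. \<Sum>i\<in>S. a i * \<sigma> (v i) d)"
proof (induction S rule: finite_induct)
  case empty then show ?case by (simp add: szero)
next
  case (insert i S)
  have vi: "v i \<in> Vsp" and vS: "\<forall>i\<in>S. v i \<in> Vsp" using insert.prems by auto
  have IH: "\<sigma> (\<lambda>d. \<Sum>i\<in>S. a i * v i d) = (\<lambda>d. \<Sum>i\<in>S. a i * \<sigma> (v i) d)"
    using insert.IH vS by blast
  have e1: "(\<lambda>d. \<Sum>i\<in>insert i S. a i * v i d) = (\<lambda>d. a i * v i d + 1 * (\<Sum>i\<in>S. a i * v i d))"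
    using insert.hyps by simp
  have "\<sigma> (\<lambda>d. a i * v i d + 1 * (\<Sum>i\<in>S. a i * v i d)) = (\<lambda>d. a i * \<sigma> (v i) d + 1 * \<sigma> (\<lambda>d. \<Sum>i\<in>S. a i * v i d) d)"
    by (rule lin[OF vi sum_Vsp[OF insert.hyps(1) vS]])
  also have "\<dots> = (\<lambda>d. \<Sum>i\<in>insert i S. a i * \<sigma> (v i) d)"
    unfolding IH using insert.hyps by simp
  finally have "\<sigma> (\<lambda>d. a i * v i d + 1 * (\<Sum>i\<in>S. a i * v i d)) = (\<lambda>d. \<Sum>i\<in>insert i S. a i * \<sigma> (v i) d)" .
  then show ?case by (simp only: e1)
qed

lemma coeff_zero: "x \<in> Vsp \<Longrightarrow> (\<And>b. \<sigma> (bvec b) d = 0) \<Longrightarrow> \<sigma> x d = 0"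
proof -
  assume x: "x \<in> Vsp" and z: "\<And>b. \<sigma> (bvec b) d = 0"
  have "\<sigma> x = \<sigma> (\<lambda>d. \<Sum>b\<in>supp x. x b * bvec b d)" using decomp[OF x] by (rule arg_cong[where f=\<sigma>])
  also have "\<dots> = (\<lambda>d. \<Sum>b\<in>supp x. x b * \<sigma> (bvec b) d)"
    using x by (intro ssum) (auto simp: Vsp_def)
  finally show ?thesis by (simp add: z)
qed

abbreviation "SL m \<equiv> \<sigma> (bvec (Lb m))"
abbreviation "SI m \<equiv> \<sigma> (bvec (Ib m))"

lemma SL_V: "SL m \<in> Vsp" and SI_V: "SI m \<in> Vsp" by (auto intro: sV)

lemma SL_even: "evenv (SL m)"
  by (rule Veven_evenv, rule seven) (auto simp: Veven_def is_even_b_def)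
lemma SI_even: "evenv (SI m)"
  by (rule Veven_evenv, rule seven) (auto simp: Veven_def is_even_b_def)
lemma SG_odd: "oddv (\<sigma> (bvec (Gb m)))"
  by (rule Vodd_oddv, rule sodd) (auto simp: Vodd_def is_even_b_def)
lemma SH_odd: "oddv (\<sigma> (bvec (Hb m)))"
  by (rule Vodd_oddv, rule sodd) (auto simp: Vodd_def is_even_b_def)

lemma brLL: "bracket s lam (SL m) (SL n) = (\<lambda>d. of_int (m - n) * SL (m + n) d)"
proof -
  have "bracket s lam (SL m) (SL n) = \<sigma> (bracket s lam (bvec (Lb m)) (bvec (Lb n)))"
    by (simp add: hom)
  also have "\<dots> = \<sigma> (\<lambda>d. of_int (m - n) * bvec (Lb (m + n)) d)"
    by (simp add: bracket_bvec smul_def)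
  also have "\<dots> = (\<lambda>d. of_int (m - n) * SL (m + n) d)" by (simp add: sscal)
  finally show ?thesis .
qed

lemma brLI: "bracket s lam (SL n) (SI m) = (\<lambda>d. of_int (n - m) * SI (n + m) d)"
proof -
  have "bracket s lam (SL n) (SI m) = \<sigma> (bracket s lam (bvec (Lb n)) (bvec (Ib m)))"
    by (simp add: hom)
  also have "\<dots> = \<sigma> (\<lambda>d. of_int (n - m) * bvec (Ib (n + m)) d)"
    by (simp add: bracket_bvec smul_def)
  also have "\<dots> = (\<lambda>d. of_int (n - m) * SI (n + m) d)" by (simp add: sscal)
  finally show ?thesis .
qed

lemma SI_Iv: "Iv (SI k)"
proof -
  have "bvec (Ib k) = bracket s lam (bvec (Gb (k - twos s))) (bvec (Gb 0))"
    by (simp add: bracket_bvec)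
  then have e: "SI k = bracket s lam (\<sigma> (bvec (Gb (k - twos s)))) (\<sigma> (bvec (Gb 0)))"
    by (simp add: hom)
  have "bracket s lam (\<sigma> (bvec (Gb (k - twos s)))) (\<sigma> (bvec (Gb 0))) d = 0" if "\<forall>j. d \<noteq> Ib j" for d
  proof -
    have "bracket s lam (\<sigma> (bvec (Gb (k - twos s)))) (\<sigma> (bvec (Gb 0))) d = (\<Sum>p\<in>{}. 0)"
      apply (subst bracket_sumP[where P="{}"])
      apply (auto intro: sV)
      subgoal for b c
        using SG_odd[of "k - twos s"] SG_odd[of 0] that
        by (cases b; cases c; cases d; auto simp: oddv_def bvec_def smul_def)
      done
    then show ?thesis by simp
  qed
  then show ?thesis unfolding Iv_def e by auto
qed

end



lemma finite_Lsupp: "x \<in> Vsp \<Longrightarrow> finite {a. x (Lb a) \<noteq> 0}"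
proof -
  assume "x \<in> Vsp"
  then have "finite (Lb -` supp x)" by (intro finite_vimageI) (auto simp: Vsp_def inj_def)
  moreover have "Lb -` supp x = {a. x (Lb a) \<noteq> 0}" by (auto simp: supp_def)
  ultimately show ?thesis by simp
qed

context autL begin

lemma nonL_L: "(\<forall>k. b \<noteq> Lb k) \<Longrightarrow> \<sigma> (bvec b) (Lb j) = 0"
  using SI_Iv SG_odd SH_odd by (cases b) (auto simp: Iv_def oddv_def)

lemma Lsurj: "\<exists>k. SL k (Lb j) \<noteq> 0"
proof (rule ccontr)
  assume "\<not> ?thesis"
  then have z: "\<And>b. \<sigma> (bvec b) (Lb j) = 0"
    using nonL_L by (metis sbasis.exhaust)
  obtain x where x: "x \<in> Vsp" "\<sigma> x = bvec (Lb j)" using ssurj[of "bvec (Lb j)"] by auto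
  have "\<sigma> x (Lb j) = 0" by (rule coeff_zero[OF x(1) z])
  then show False using x(2) by (simp add: bvec_def)
qed

lemma eigL: "bracket s lam (SL 0) (SL k) = (\<lambda>d. - of_int k * SL k d)"
  using brLL[of 0 k] by simp

lemma eigI: "bracket s lam (SL 0) (SI k) = (\<lambda>d. - of_int k * SI k d)"
  using brLI[of 0 k] by simp

lemma top_deg: "SL 0 (Lb q) \<noteq> 0 \<Longrightarrow> q \<le> 0"
proof (rule ccontr)
  assume q: "SL 0 (Lb q) \<noteq> 0" "\<not> q \<le> 0"
  define LY where "LY = {a. SL 0 (Lb a) \<noteq> 0}"
  have fLY: "finite LY" unfolding LY_def by (rule finite_Lsupp[OF SL_V])
  define Q where "Q = Max LY"
  have qLY: "q \<in> LY" using q by (simp add: LY_def)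
  have QLY: "Q \<in> LY" unfolding Q_def using fLY qLY by (intro Max_in) auto
  have Qge: "q \<le> Q" unfolding Q_def using fLY qLY by simp
  have Qmax: "\<And>a. SL 0 (Lb a) \<noteq> 0 \<Longrightarrow> a \<le> Q" unfolding Q_def using fLY by (simp add: LY_def)
  obtain k where k: "SL k (Lb (Q + 1)) \<noteq> 0" using Lsurj by blast
  define LZ where "LZ = {a. SL k (Lb a) \<noteq> 0}"
  have fLZ: "finite LZ" unfolding LZ_def by (rule finite_Lsupp[OF SL_V])
  define T where "T = Max LZ"
  have TLZ: "T \<in> LZ" unfolding T_def using fLZ k by (intro Max_in) (auto simp: LZ_def)
  have Tge: "Q + 1 \<le> T" unfolding T_def using fLZ k by (simp add: LZ_def)
  have Tmax: "\<And>a. SL k (Lb a) \<noteq> 0 \<Longrightarrow> a \<le> T" unfolding T_def using fLZ by (simp add: LZ_def)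
  have "bracket s lam (SL 0) (SL k) (Lb (Q + T)) =
     (\<Sum>p\<in>{(Lb Q, Lb T)}. SL 0 (fst p) * SL k (snd p) * br s lam (fst p) (snd p) (Lb (Q + T)))"
  proof (rule bracket_sumP[OF SL_V SL_V])
    fix b c assume bc: "(b, c) \<notin> {(Lb Q, Lb T)}"
    show "SL 0 b * SL k c * br s lam b c (Lb (Q + T)) = 0"
    proof (cases "SL 0 b = 0 \<or> SL k c = 0")
      case True then show ?thesis by auto
    next
      case False
      have key: "a = Q \<and> a' = T" if "SL 0 (Lb a) \<noteq> 0" "SL k (Lb a') \<noteq> 0" "a + a' = Q + T" for a a'
      proof -
        have "a \<le> Q" "a' \<le> T" using that Qmax Tmax by auto
        then show ?thesis using that(3) by linarith
      qed
      show ?thesis using bc False key unfolding br_L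
        by (cases b; cases c; auto)
    qed
  qed simp
  also have "\<dots> = SL 0 (Lb Q) * SL k (Lb T) * of_int (Q - T)" by (simp add: smul_def bvec_def)
  finally have e1: "bracket s lam (SL 0) (SL k) (Lb (Q + T)) = SL 0 (Lb Q) * SL k (Lb T) * of_int (Q - T)" .
  have "SL k (Lb (Q + T)) = 0"
    using Tmax[of "Q + T"] Qge q(2) by force
  then have "bracket s lam (SL 0) (SL k) (Lb (Q + T)) = 0" by (simp add: eigL)
  moreover have "SL 0 (Lb Q) \<noteq> 0" "SL k (Lb T) \<noteq> 0" using QLY TLZ by (auto simp: LY_def LZ_def)
  moreover have "of_int (Q - T) \<noteq> (0::complex)" using Tge by simp
  ultimately show False using e1 by simp
qed

lemma bot_deg: "SL 0 (Lb q) \<noteq> 0 \<Longrightarrow> 0 \<le> q"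
proof (rule ccontr)
  assume q: "SL 0 (Lb q) \<noteq> 0" "\<not> 0 \<le> q"
  define LY where "LY = {a. SL 0 (Lb a) \<noteq> 0}"
  have fLY: "finite LY" unfolding LY_def by (rule finite_Lsupp[OF SL_V])
  define Q where "Q = Min LY"
  have qLY: "q \<in> LY" using q by (simp add: LY_def)
  have QLY: "Q \<in> LY" unfolding Q_def using fLY qLY by (intro Min_in) auto
  have Qge: "Q \<le> q" unfolding Q_def using fLY qLY by simp
  have Qmax: "\<And>a. SL 0 (Lb a) \<noteq> 0 \<Longrightarrow> Q \<le> a" unfolding Q_def using fLY by (simp add: LY_def)
  obtain k where k: "SL k (Lb (Q - 1)) \<noteq> 0" using Lsurj by blast
  define LZ where "LZ = {a. SL k (Lb a) \<noteq> 0}"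
  have fLZ: "finite LZ" unfolding LZ_def by (rule finite_Lsupp[OF SL_V])
  define T where "T = Min LZ"
  have TLZ: "T \<in> LZ" unfolding T_def using fLZ k by (intro Min_in) (auto simp: LZ_def)
  have Tge: "T \<le> Q - 1" unfolding T_def using Min_le[OF fLZ, of "Q - 1"] k by (simp add: LZ_def)
  have Tmax: "\<And>a. SL k (Lb a) \<noteq> 0 \<Longrightarrow> T \<le> a" unfolding T_def using fLZ by (simp add: LZ_def)
  have "bracket s lam (SL 0) (SL k) (Lb (Q + T)) =
     (\<Sum>p\<in>{(Lb Q, Lb T)}. SL 0 (fst p) * SL k (snd p) * br s lam (fst p) (snd p) (Lb (Q + T)))"
  proof (rule bracket_sumP[OF SL_V SL_V])
    fix b c assume bc: "(b, c) \<notin> {(Lb Q, Lb T)}"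
    show "SL 0 b * SL k c * br s lam b c (Lb (Q + T)) = 0"
    proof (cases "SL 0 b = 0 \<or> SL k c = 0")
      case True then show ?thesis by auto
    next
      case False
      have key: "a = Q \<and> a' = T" if "SL 0 (Lb a) \<noteq> 0" "SL k (Lb a') \<noteq> 0" "a + a' = Q + T" for a a'
      proof -
        have "Q \<le> a" "T \<le> a'" using that Qmax Tmax by auto
        then show ?thesis using that(3) by linarith
      qed
      show ?thesis using bc False key unfolding br_L
        by (cases b; cases c; auto)
    qed
  qed simp
  also have "\<dots> = SL 0 (Lb Q) * SL k (Lb T) * of_int (Q - T)" by (simp add: smul_def bvec_def)
  finally have e1: "bracket s lam (SL 0) (SL k) (Lb (Q + T)) = SL 0 (Lb Q) * SL k (Lb T) * of_int (Q - T)" .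
  have "SL k (Lb (Q + T)) = 0"
    using Tmax[of "Q + T"] Qge q(2) by force
  then have "bracket s lam (SL 0) (SL k) (Lb (Q + T)) = 0" by (simp add: eigL)
  moreover have "SL 0 (Lb Q) \<noteq> 0" "SL k (Lb T) \<noteq> 0" using QLY TLZ by (auto simp: LY_def LZ_def)
  moreover have "of_int (Q - T) \<noteq> (0::complex)" using Tge by simp
  ultimately show False using e1 by simp
qed

end


lemma bvec_app: "bvec b c = (if c = b then 1 else 0)"
  by (simp add: bvec_def)

context autL begin

lemma ySupp: "SL 0 (Lb a) \<noteq> 0 \<Longrightarrow> a = 0"
  using top_deg bot_deg by force

lemma SL_cases: "SL m b \<noteq> 0 \<Longrightarrow> (\<exists>a. b = Lb a) \<or> (\<exists>a. b = Ib a)"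
  using SL_even[of m] by (cases b) (auto simp: evenv_def)

lemma eigL_coef: "SL k (Lb j) \<noteq> 0 \<Longrightarrow> SL 0 (Lb 0) * of_int j = of_int k"
proof -
  assume nz: "SL k (Lb j) \<noteq> 0"
  have "bracket s lam (SL 0) (SL k) (Lb j) =
     (\<Sum>p\<in>{(Lb 0, Lb j)}. SL 0 (fst p) * SL k (snd p) * br s lam (fst p) (snd p) (Lb j))"
  proof (rule bracket_sumP[OF SL_V SL_V])
    fix b c assume bc: "(b, c) \<notin> {(Lb 0, Lb j)}"
    show "SL 0 b * SL k c * br s lam b c (Lb j) = 0"
    proof (cases "SL 0 b = 0 \<or> SL k c = 0")
      case True then show ?thesis by auto
    next
      case False
      then show ?thesis using bc ySupp unfolding br_L
        by (cases b; cases c; auto)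
    qed
  qed simp
  also have "\<dots> = SL 0 (Lb 0) * SL k (Lb j) * of_int (0 - j)" by (simp add: smul_def bvec_app)
  finally have "SL 0 (Lb 0) * SL k (Lb j) * of_int (0 - j) = - of_int k * SL k (Lb j)"
    by (simp only: eigL)
  then have "SL k (Lb j) * (SL 0 (Lb 0) * of_int j - of_int k) = 0"
    by (simp add: algebra_simps)
  then show ?thesis using nz by auto
qed

lemma a0_int: "\<exists>k0. SL 0 (Lb 0) = of_int k0 \<and> k0 \<noteq> 0"
proof -
  obtain k where k: "SL k (Lb 1) \<noteq> 0" using Lsurj by blast
  have a: "SL 0 (Lb 0) = of_int k" using eigL_coef[OF k] by simp
  have "k \<noteq> 0" using k ySupp[of 1] by auto
  then show ?thesis using a by blast
qed

lemma L1_nonzero: "\<exists>j. SL 1 (Lb j) \<noteq> 0"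
proof (rule ccontr)
  assume "\<not> ?thesis"
  then have z: "\<And>j. SL 1 (Lb j) = 0" by blast
  have "bracket s lam (SL 1) (SL (-1)) (Lb 0) = (\<Sum>p\<in>{}. SL 1 (fst p) * SL (-1) (snd p) * br s lam (fst p) (snd p) (Lb 0))"
  proof (rule bracket_sumP[OF SL_V SL_V])
    fix b c
    show "SL 1 b * SL (-1) c * br s lam b c (Lb 0) = 0"
      using z unfolding br_L by (cases b; cases c; auto)
  qed simp
  then have "SL 0 (Lb 0) = 0" using brLL[of 1 "-1"] by simp
  then show False using a0_int by auto
qed

definition eps :: int where "eps = (if SL 0 (Lb 0) = 1 then 1 else -1)"

lemma eps_prop: "SL 0 (Lb 0) = of_int eps" "eps = 1 \<or> eps = -1"
proof -
  obtain k0 where k0: "SL 0 (Lb 0) = of_int k0" "k0 \<noteq> 0" using a0_int by blast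
  obtain j where j: "SL 1 (Lb j) \<noteq> 0" using L1_nonzero by blast
  have "of_int (k0 * j) = (1::complex)" using eigL_coef[OF j] k0 by simp
  then have "k0 * j = 1" by (metis of_int_eq_1_iff)
  then have "k0 = 1 \<or> k0 = -1" by (rule pos_zmult_eq_1_iff_lemma)
  then show "SL 0 (Lb 0) = of_int eps" "eps = 1 \<or> eps = -1" using k0 by (auto simp: eps_def)
qed

lemma eps_sq: "eps * eps = 1" using eps_prop(2) by auto

lemma Lsupp: "SL m (Lb j) \<noteq> 0 \<Longrightarrow> j = eps * m"
proof -
  assume "SL m (Lb j) \<noteq> 0"
  then have "of_int (eps * j) = (of_int m :: complex)" using eigL_coef eps_prop(1) by simp
  then have "eps * j = m" by (metis of_int_eq_iff)
  then show ?thesis using eps_prop(2) by auto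
qed

definition cc :: "int \<Rightarrow> complex" where "cc m = SL m (Lb (eps * m))"

lemma Lform: "SL m (Lb j) = (if j = eps * m then cc m else 0)"
  using Lsupp[of m j] by (auto simp: cc_def)

lemma cc0: "cc 0 = of_int eps"
  using eps_prop(1) by (simp add: cc_def)

lemma crel: "m \<noteq> n \<Longrightarrow> cc (m + n) = of_int eps * cc m * cc n"
proof -
  assume mn: "m \<noteq> n"
  have "bracket s lam (SL m) (SL n) (Lb (eps * (m + n))) =
     (\<Sum>p\<in>{(Lb (eps * m), Lb (eps * n))}. SL m (fst p) * SL n (snd p) * br s lam (fst p) (snd p) (Lb (eps * (m + n))))"
  proof (rule bracket_sumP[OF SL_V SL_V])
    fix b c assume bc: "(b, c) \<notin> {(Lb (eps * m), Lb (eps * n))}"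
    show "SL m b * SL n c * br s lam b c (Lb (eps * (m + n))) = 0"
      using bc unfolding br_L by (cases b; cases c; auto simp: Lform)
  qed simp
  also have "\<dots> = cc m * cc n * of_int (eps * m - eps * n)" by (simp add: smul_def bvec_app Lform algebra_simps)
  finally have "of_int (m - n) * cc (m + n) = cc m * cc n * of_int (eps * m - eps * n)"
    by (simp add: brLL Lform)
  then have "of_int (m - n) * cc (m + n) = of_int (m - n) * (of_int eps * cc m * cc n)"
    by (simp add: algebra_simps)
  then show ?thesis using mn by simp
qed


lemma SI_nonI: "SI m (Lb a) = 0" "SI m (Gb a) = 0" "SI m (Hb a) = 0"
  using SI_Iv[of m] by (auto simp: Iv_def)

lemma Isupp: "SI m (Ib j) \<noteq> 0 \<Longrightarrow> j = eps * m"
proof -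
  assume nz: "SI m (Ib j) \<noteq> 0"
  have "bracket s lam (SL 0) (SI m) (Ib j) =
     (\<Sum>p\<in>{(Lb 0, Ib j)}. SL 0 (fst p) * SI m (snd p) * br s lam (fst p) (snd p) (Ib j))"
  proof (rule bracket_sumP[OF SL_V SI_V])
    fix b c assume bc: "(b, c) \<notin> {(Lb 0, Ib j)}"
    show "SL 0 b * SI m c * br s lam b c (Ib j) = 0"
    proof (cases "SL 0 b = 0 \<or> SI m c = 0")
      case True then show ?thesis by auto
    next
      case False
      then show ?thesis using bc ySupp SL_cases[of 0 b] SI_nonI unfolding br_I
        by (cases b; cases c; auto)
    qed
  qed simp
  also have "\<dots> = SL 0 (Lb 0) * SI m (Ib j) * of_int (0 - j)" by (simp add: smul_def bvec_app)
  finally have "SL 0 (Lb 0) * SI m (Ib j) * of_int (0 - j) = - of_int m * SI m (Ib j)"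
    by (simp only: eigI)
  then have "SI m (Ib j) * (of_int (eps * j) - of_int m) = 0"
    by (simp add: algebra_simps eps_prop(1))
  then have "of_int (eps * j) = (of_int m :: complex)" using nz by simp
  then have "eps * j = m" by (metis of_int_eq_iff)
  then show ?thesis using eps_prop(2) by auto
qed

definition ee :: "int \<Rightarrow> complex" where "ee m = SI m (Ib (eps * m))"

lemma Iform: "SI m d = (if d = Ib (eps * m) then ee m else 0)"
  using Isupp[of m] SI_nonI[of m] by (cases d) (auto simp: ee_def)

lemma erel: "n \<noteq> m \<Longrightarrow> ee (n + m) = of_int eps * cc n * ee m"
proof -
  assume mn: "n \<noteq> m"
  have "bracket s lam (SL n) (SI m) (Ib (eps * (n + m))) =
     (\<Sum>p\<in>{(Lb (eps * n), Ib (eps * m))}. SL n (fst p) * SI m (snd p) * br s lam (fst p) (snd p) (Ib (eps * (n + m))))"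
  proof (rule bracket_sumP[OF SL_V SI_V])
    fix b c assume bc: "(b, c) \<notin> {(Lb (eps * n), Ib (eps * m))}"
    show "SL n b * SI m c * br s lam b c (Ib (eps * (n + m))) = 0"
    proof (cases "SL n b = 0 \<or> SI m c = 0")
      case True then show ?thesis by auto
    next
      case False
      then show ?thesis using bc SL_cases[of n b] unfolding br_I
        by (cases b; cases c; auto simp: Lform Iform)
    qed
  qed simp
  also have "\<dots> = cc n * ee m * of_int (eps * n - eps * m)" by (simp add: smul_def bvec_app Lform Iform algebra_simps)
  finally have "of_int (n - m) * ee (n + m) = cc n * ee m * of_int (eps * n - eps * m)"
    by (simp add: brLI Iform)
  then have "of_int (n - m) * ee (n + m) = of_int (n - m) * (of_int eps * cc n * ee m)"
    by (simp add: algebra_simps)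
  then show ?thesis using mn by simp
qed

definition FF :: "int \<Rightarrow> int \<Rightarrow> complex" where "FF m j = SL m (Ib j)"

lemma Frel: "of_int (m - n) * FF (m + n) j =
   cc m * of_int (2 * eps * m - j) * FF n (j - eps * m) + cc n * of_int (j - 2 * eps * n) * FF m (j - eps * n)"
proof -
  have "bracket s lam (SL m) (SL n) (Ib j) =
     (\<Sum>p\<in>{(Lb (eps * m), Ib (j - eps * m)), (Ib (j - eps * n), Lb (eps * n))}. SL m (fst p) * SL n (snd p) * br s lam (fst p) (snd p) (Ib j))"
  proof (rule bracket_sumP[OF SL_V SL_V])
    fix b c assume bc: "(b, c) \<notin> {(Lb (eps * m), Ib (j - eps * m)), (Ib (j - eps * n), Lb (eps * n))}"
    show "SL m b * SL n c * br s lam b c (Ib j) = 0"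
    proof (cases "SL m b = 0 \<or> SL n c = 0")
      case True then show ?thesis by auto
    next
      case False
      then show ?thesis using bc SL_cases[of m b] SL_cases[of n c] unfolding br_I
        by (cases b; cases c; auto simp: Lform)
    qed
  qed simp
  also have "\<dots> = cc m * FF n (j - eps * m) * of_int (2 * eps * m - j) + FF m (j - eps * n) * cc n * of_int (j - 2 * eps * n)"
    by (simp add: smul_def bvec_app Lform FF_def algebra_simps)
  finally show ?thesis
    by (simp add: brLL FF_def algebra_simps)
qed

end


lemma mult_rec:
  fixes d :: "int \<Rightarrow> complex"
  assumes d0: "d 0 = 1" and r: "\<And>m n. m \<noteq> n \<Longrightarrow> d (m + n) = d m * d n"
  shows "d 1 \<noteq> 0" "d m = d 1 powi m"
proof -
  have h1: "d 1 * d (-1) = 1" using r[of 1 "-1"] d0 by simp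
  then show nz: "d 1 \<noteq> 0" by auto
  have dm1: "d (-1) = inverse (d 1)" using h1 nz by (simp add: field_simps)
  have d2: "d 2 = d 1 * d 1"
  proof -
    have "d 1 = d 2 * d (-1)" using r[of 2 "-1"] by simp
    then have "d 1 * d 1 = d 2 * (d 1 * d (-1))" by (simp add: algebra_simps)
    then show ?thesis using h1 by simp
  qed
  have dm2: "d (-2) = d (-1) * d (-1)"
  proof -
    have "d (-1) = d (-2) * d 1" using r[of "-2" 1] by simp
    then have "d (-1) * d (-1) = d (-2) * (d 1 * d (-1))" by (simp add: algebra_simps)
    then show ?thesis using h1 by simp
  qed
  have pos: "d (int n) = d 1 ^ n" for n
  proof (induction n)
    case 0 then show ?case using d0 by simp
  next
    case (Suc n)
    show ?case
    proof (cases "n = 1")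
      case True then show ?thesis using d2 by (simp add: power2_eq_square)
    next
      case False
      then have "d (int n + 1) = d (int n) * d 1" using r[of "int n" 1] by simp
      then show ?thesis using Suc by (simp add: add.commute mult.commute)
    qed
  qed
  have neg: "d (- int n) = d (-1) ^ n" for n
  proof (induction n)
    case 0 then show ?case using d0 by simp
  next
    case (Suc n)
    show ?case
    proof (cases "n = 1")
      case True then show ?thesis using dm2 by (simp add: power2_eq_square)
    next
      case False
      then have "d (- int n + -1) = d (- int n) * d (-1)" using r[of "- int n" "-1"] by simp
      then show ?thesis using Suc by (simp add: algebra_simps)
    qed
  qed
  show "d m = d 1 powi m"
  proof (cases "m \<ge> 0")
    case True
    then obtain n where "m = int n" by (metis nonneg_int_cases)
    then show ?thesis using pos by (simp add: power_int_def)
  next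
    case False
    obtain n where n0: "- m = int n" using False nonneg_int_cases[of "- m"] by force
    then have n: "m = - int n" by simp
    have "d m = inverse (d 1 ^ n)" using neg[of n] n by (simp add: dm1 power_inverse)
    moreover have "d 1 powi m = inverse (d 1 ^ n)" using False n0 by (simp add: power_int_def power_inverse)
    ultimately show ?thesis by simp
  qed
qed

lemma add_rec:
  fixes f :: "int \<Rightarrow> complex"
  assumes f0: "f 0 = 0" and r: "\<And>m n. m \<noteq> n \<Longrightarrow> f (m + n) = f m + f n"
  shows "f m = of_int m * f 1"
proof -
  have h1: "f (-1) = - f 1" using r[of 1 "-1"] f0 by (simp add: eq_neg_iff_add_eq_0 add.commute)
  have f2: "f 2 = 2 * f 1"
  proof -
    have "f 1 = f 2 + f (-1)" using r[of 2 "-1"] by simp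
    then show ?thesis using h1 by simp
  qed
  have fm2: "f (-2) = - 2 * f 1"
  proof -
    have "f (-1) = f (-2) + f 1" using r[of "-2" 1] by simp
    then have "f (-2) = f (-1) - f 1" by (simp add: algebra_simps)
    then show ?thesis using h1 by simp
  qed
  have pos: "f (int n) = of_nat n * f 1" for n
  proof (induction n)
    case 0 then show ?case using f0 by simp
  next
    case (Suc n)
    show ?case
    proof (cases "n = 1")
      case True then show ?thesis using f2 by simp
    next
      case False
      then have "f (int n + 1) = f (int n) + f 1" using r[of "int n" 1] by simp
      then show ?thesis using Suc by (simp add: algebra_simps)
    qed
  qed
  have neg: "f (- int n) = - of_nat n * f 1" for n
  proof (induction n)
    case 0 then show ?case using f0 by simp
  next
    case (Suc n)
    show ?case
    proof (cases "n = 1")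
      case True then show ?thesis using fm2 by simp
    next
      case False
      then have "f (- int n + -1) = f (- int n) + f (-1)" using r[of "- int n" "-1"] by simp
      then show ?thesis using Suc h1 by (simp add: algebra_simps)
    qed
  qed
  show ?thesis
  proof (cases "m \<ge> 0")
    case True
    then obtain n where "m = int n" by (metis nonneg_int_cases)
    then show ?thesis using pos by simp
  next
    case False
    obtain n where n0: "- m = int n" using False nonneg_int_cases[of "- m"] by force
    then have n: "m = - int n" by simp
    show ?thesis using neg[of n] n by simp
  qed
qed



context autL begin

definition alpha where "alpha = of_int eps * cc 1"

lemma eps_c: "of_int eps * (of_int eps :: complex) = 1"
  using eps_prop(2) by auto

lemma eps_c2: "of_int eps * (of_int eps * z) = (z :: complex)"
  using eps_c by (simp add: mult.assoc[symmetric])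

lemma dd: "of_int eps * cc m = alpha powi m" and alpha_nz: "alpha \<noteq> 0"
proof -
  define d where "d m = of_int eps * cc m" for m
  have d0: "d 0 = 1" using eps_c by (simp add: d_def cc0)
  have r: "d (m + n) = d m * d n" if "m \<noteq> n" for m n
  proof -
    have "d (m + n) = of_int eps * (of_int eps * cc m * cc n)" using crel[OF that] by (simp add: d_def)
    also have "\<dots> = (of_int eps * of_int eps) * (of_int eps * of_int eps) * (d m * d n)"
      using eps_c by (simp add: d_def algebra_simps)
    finally show ?thesis using eps_c by simp
  qed
  have "d 1 = alpha" by (simp add: d_def alpha_def)
  then show "of_int eps * cc m = alpha powi m" "alpha \<noteq> 0"
    using mult_rec[of d, OF d0 r] by (auto simp: d_def)
qed

lemma cc_form: "cc m = of_int eps * alpha powi m"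
proof -
  have "of_int eps * (of_int eps * cc m) = of_int eps * alpha powi m" by (simp add: dd)
  then show ?thesis using eps_c by (simp add: mult.assoc[symmetric])
qed

lemma ee_form: "ee m = alpha powi m * ee 0"
proof (cases "m = 0")
  case True then show ?thesis by simp
next
  case False
  then have "ee (m + 0) = of_int eps * cc m * ee 0" by (rule erel)
  then show ?thesis by (simp add: dd)
qed

lemma mu_nz: "ee 0 \<noteq> 0"
proof
  assume "ee 0 = 0"
  then have "SI 0 = (\<lambda>d. 0)" by (auto simp: Iform)
  then have "\<sigma> (bvec (Ib 0)) = \<sigma> (\<lambda>d. 0)" by (simp add: szero)
  then have "bvec (Ib 0) = (\<lambda>d. 0)" using sinj by (auto dest: inj_onD)
  then show False by (metis bvec_app zero_neq_one)
qed

lemma F00: "FF 0 0 = 0"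
proof -
  have e: "of_int 1 * FF 1 eps = cc 1 * of_int (2 * eps * 1 - eps) * FF 0 (eps - eps * 1)
      + cc 0 * of_int (eps - 2 * eps * 0) * FF 1 (eps - eps * 0)"
    using Frel[of 1 0 eps] by simp
  have "cc 1 \<noteq> 0" using cc_form alpha_nz eps_prop(2) by auto
  then show ?thesis using e eps_prop(2) cc0 by (auto simp: cc_form)
qed

lemma Foff: "k \<noteq> 0 \<Longrightarrow> FF m (eps * (m + k)) * of_int k = - (alpha powi m) * of_int (m - k) * FF 0 (eps * k)"
proof -
  assume k: "k \<noteq> 0"
  have i1: "2 * eps * m - eps * (m + k) = eps * (m - k)" "eps * (m + k) - eps * m = eps * k"
    "eps * (m + k) - 2 * eps * 0 = eps * (m + k)" "eps * (m + k) - eps * 0 = eps * (m + k)"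
    by (simp_all add: algebra_simps)
  have e: "of_int m * FF m (eps * (m + k)) = cc m * of_int (eps * (m - k)) * FF 0 (eps * k)
      + cc 0 * of_int (eps * (m + k)) * FF m (eps * (m + k))"
    using Frel[of m 0 "eps * (m + k)"] unfolding i1 by simp
  have c1: "cc m * of_int (eps * (m - k)) = alpha powi m * of_int (m - k)"
    by (simp add: cc_form algebra_simps eps_c2)
  have c2: "cc 0 * of_int (eps * (m + k)) = of_int (m + k)"
    using eps_c by (simp add: cc0 algebra_simps)
  show ?thesis using e unfolding c1 c2 by (simp add: algebra_simps)
qed

definition DD where "DD m = FF m (eps * m)"

lemma Drel: "m \<noteq> n \<Longrightarrow> DD (m + n) = alpha powi m * DD n + alpha powi n * DD m"
proof -
  assume mn: "m \<noteq> n"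
  have i1: "2 * eps * m - eps * (m + n) = eps * (m - n)" "eps * (m + n) - eps * m = eps * n"
    "eps * (m + n) - 2 * eps * n = eps * (m - n)" "eps * (m + n) - eps * n = eps * m"
    by (simp_all add: algebra_simps)
  have e: "of_int (m - n) * DD (m + n) = cc m * of_int (eps * (m - n)) * DD n + cc n * of_int (eps * (m - n)) * DD m"
    using Frel[of m n "eps * (m + n)"] unfolding i1 DD_def by simp
  have c: "cc a * of_int (eps * (m - n)) = of_int (m - n) * alpha powi a" for a
    by (simp add: cc_form algebra_simps eps_c2)
  have "of_int (m - n) * DD (m + n) = of_int (m - n) * (alpha powi m * DD n + alpha powi n * DD m)"
    using e unfolding c by (simp add: algebra_simps)
  then show ?thesis using mn by simp
qed

lemma D_form: "DD m = of_int m * alpha powi m * (DD 1 / alpha)"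
proof -
  define E where "E m = DD m / alpha powi m" for m
  have E0: "E 0 = 0" using F00 by (simp add: E_def DD_def)
  have r: "E (m + n) = E m + E n" if "m \<noteq> n" for m n
    using Drel[OF that] alpha_nz by (simp add: E_def power_int_add field_simps)
  have "E m = of_int m * E 1" by (rule add_rec[of E, OF E0 r])
  then show ?thesis using alpha_nz by (simp add: E_def field_simps)
qed

end


lemma smul_bvec_Vsp: "(\<lambda>c. a * bvec b c) \<in> Vsp"
  using lin_Vsp[of "bvec b" "bvec b" a 0] by simp

lemma expI_I: "expI s lam a k (bvec (Ib m)) = bvec (Ib m)"
  unfolding expI_def bracket_bvec by simp

lemma expI_L:
  assumes u: "u \<in> Vsp" "Iv u"
  shows "expI s lam a k (\<lambda>d. bvec (Lb m) d + u d) = (\<lambda>d. bvec (Lb m) d + (u d + a * br s lam (Ib k) (Lb m) d))"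
proof
  fix d
  define x where "x = (\<lambda>d. bvec (Lb m) d + u d)"
  have xV: "x \<in> Vsp" unfolding x_def using lin_Vsp[OF bvec_Vsp u(1), of 1 "Lb m" 1] by simp
  have "bracket s lam (bvec (Ib k)) x d =
     (\<Sum>p\<in>{(Ib k, Lb m)}. bvec (Ib k) (fst p) * x (snd p) * br s lam (fst p) (snd p) d)"
  proof (rule bracket_sumP[OF bvec_Vsp xV])
    fix b c assume bc: "(b, c) \<notin> {(Ib k, Lb m)}"
    show "bvec (Ib k) b * x c * br s lam b c d = 0"
      using bc u(2) unfolding x_def Iv_def
      by (cases c; cases d; auto simp: bvec_app smul_def)
  qed simp
  also have "\<dots> = br s lam (Ib k) (Lb m) d"
    using u(2) by (simp add: x_def bvec_app Iv_def)
  finally show "expI s lam a k (\<lambda>d. bvec (Lb m) d + u d) d = bvec (Lb m) d + (u d + a * br s lam (Ib k) (Lb m) d)"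
    unfolding expI_def x_def by simp
qed

definition tauL :: "complex \<Rightarrow> complex \<Rightarrow> (int \<Rightarrow> complex) \<Rightarrow> int list \<Rightarrow> svec \<Rightarrow> svec" where
  "tauL s lam w ks = foldr (\<lambda>k f. expI s lam (w k) k \<circ> f) ks id"

lemma tau_Igrp: "tauL s lam w ks \<in> Igrp s lam"
proof (induction ks)
  case Nil then show ?case using Igrp.ident[of s lam] by (simp add: tauL_def id_def)
next
  case (Cons k ks)
  have "expI s lam (w k) k \<circ> tauL s lam w ks \<in> Igrp s lam"
    by (rule Igrp.comp[OF Igrp.gen Cons])
  then show ?case by (simp add: tauL_def comp_def)
qed

lemma tau_I: "tauL s lam w ks (bvec (Ib m)) = bvec (Ib m)"
  by (induction ks) (auto simp: tauL_def expI_I)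

definition UU where "UU s lam w ks m = (\<lambda>d. sum_list (map (\<lambda>k. w k * br s lam (Ib k) (Lb m) d) ks))"

lemma UU_V: "UU s lam w ks m \<in> Vsp \<and> Iv (UU s lam w ks m)"
proof (induction ks)
  case Nil then show ?case by (simp add: UU_def Iv_def)
next
  case (Cons k ks)
  have e: "UU s lam w (k # ks) m = (\<lambda>d. w k * (\<lambda>c. - of_int (m - k) * bvec (Ib (m + k)) c) d + 1 * UU s lam w ks m d)"
    by (simp add: UU_def smul_def)
  have "(\<lambda>d. w k * (\<lambda>c. - of_int (m - k) * bvec (Ib (m + k)) c) d + 1 * UU s lam w ks m d) \<in> Vsp"
    using Cons smul_bvec_Vsp by (intro lin_Vsp) auto
  moreover have "Iv (UU s lam w (k # ks) m)"
    using Cons unfolding Iv_def by (simp add: UU_def smul_def bvec_app)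
  ultimately show ?case using e by simp
qed

lemma tau_L: "tauL s lam w ks (bvec (Lb m)) = (\<lambda>d. bvec (Lb m) d + UU s lam w ks m d)"
proof (induction ks)
  case Nil then show ?case by (simp add: tauL_def UU_def)
next
  case (Cons k ks)
  have "tauL s lam w (k # ks) (bvec (Lb m)) = expI s lam (w k) k (tauL s lam w ks (bvec (Lb m)))"
    by (simp add: tauL_def)
  also have "\<dots> = (\<lambda>d. bvec (Lb m) d + (UU s lam w ks m d + w k * br s lam (Ib k) (Lb m) d))"
    unfolding Cons using UU_V by (intro expI_L) auto
  also have "\<dots> = (\<lambda>d. bvec (Lb m) d + UU s lam w (k # ks) m d)"
    by (simp add: UU_def add.commute)
  finally show ?case .
qed


context autL begin

definition KK where "KK = {k. FF 0 (eps * k) \<noteq> 0}"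

lemma KK_fin: "finite KK"
proof -
  have "finite (Ib -` supp (SL 0))" using SL_V[of 0] by (intro finite_vimageI) (auto simp: Vsp_def inj_def)
  then have "finite ((\<lambda>j. eps * j) ` (Ib -` supp (SL 0)))" by simp
  moreover have "KK \<subseteq> (\<lambda>j. eps * j) ` (Ib -` supp (SL 0))"
  proof
    fix k assume "k \<in> KK"
    then have "eps * k \<in> Ib -` supp (SL 0)" by (simp add: KK_def FF_def supp_def)
    moreover have "k = eps * (eps * k)" using eps_sq by (simp add: mult.assoc[symmetric])
    ultimately show "k \<in> (\<lambda>j. eps * j) ` (Ib -` supp (SL 0))" by blast
  qed
  ultimately show ?thesis by (rule finite_subset[rotated])
qed

definition ww where "ww k = - FF 0 (eps * k) / (of_int k * ee 0 * alpha powi k)"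

definition ks where "ks = sorted_list_of_set KK"

lemma ks_props: "distinct ks" "set ks = KK"
  using KK_fin by (auto simp: ks_def)

lemma sigma_tau_L: "\<sigma> (tauL s lam ww ks (bvec (Lb m))) =
    (\<lambda>d. SL m d + (\<Sum>k\<in>KK. (ww k * - of_int (m - k)) * SI (m + k) d))"
proof -
  have t1: "tauL s lam ww ks (bvec (Lb m)) = (\<lambda>d. 1 * bvec (Lb m) d + 1 * (\<Sum>k\<in>KK. (ww k * - of_int (m - k)) * bvec (Ib (m + k)) d))"
  proof -
    have u: "UU s lam ww ks m d = (\<Sum>k\<in>KK. (ww k * - of_int (m - k)) * bvec (Ib (m + k)) d)" for d
    proof -
      have "UU s lam ww ks m d = (\<Sum>k\<in>set ks. ww k * br s lam (Ib k) (Lb m) d)"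
        unfolding UU_def by (rule sum_list_distinct_conv_sum_set[OF ks_props(1)])
      also have "\<dots> = (\<Sum>k\<in>KK. (ww k * - of_int (m - k)) * bvec (Ib (m + k)) d)"
        unfolding ks_props(2) by (simp add: smul_def mult.assoc)
      finally show ?thesis .
    qed
    show ?thesis unfolding tau_L u by simp
  qed
  have Y: "(\<lambda>d. \<Sum>k\<in>KK. (ww k * - of_int (m - k)) * bvec (Ib (m + k)) d) \<in> Vsp"
    using sum_Vsp[OF KK_fin, of "\<lambda>k. bvec (Ib (m + k))" "\<lambda>k. ww k * - of_int (m - k)"] by simp
  have t2: "\<sigma> (\<lambda>d. 1 * bvec (Lb m) d + 1 * (\<Sum>k\<in>KK. (ww k * - of_int (m - k)) * bvec (Ib (m + k)) d)) = (\<lambda>d. 1 * SL m d + 1 * \<sigma> (\<lambda>d. \<Sum>k\<in>KK. (ww k * - of_int (m - k)) * bvec (Ib (m + k)) d) d)"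
    by (rule lin[OF bvec_Vsp Y, of 1 "Lb m" 1])
  have t3: "\<sigma> (\<lambda>d. \<Sum>k\<in>KK. (ww k * - of_int (m - k)) * bvec (Ib (m + k)) d) = (\<lambda>d. \<Sum>k\<in>KK. (ww k * - of_int (m - k)) * SI (m + k) d)"
    using ssum[OF KK_fin, of "\<lambda>k. bvec (Ib (m + k))" "\<lambda>k. ww k * - of_int (m - k)"] by simp
  show ?thesis unfolding t1 t2 t3 by simp
qed

lemma main: "\<exists>\<tau>\<in>Igrp s lam. \<exists>\<epsilon>::int. \<epsilon> \<in> {1, -1} \<and> (\<exists>\<alpha> \<mu> \<beta> :: complex. \<alpha> \<noteq> 0 \<and> \<mu> \<noteq> 0 \<and>
     (\<forall>m::int.
        (\<sigma> \<circ> \<tau>) (bvec (Lb m)) =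
          (\<lambda>d. of_int \<epsilon> * \<alpha> powi m * bvec (Lb (\<epsilon> * m)) d
              + of_int m * \<alpha> powi m * \<beta> * bvec (Ib (\<epsilon> * m)) d)
      \<and> (\<sigma> \<circ> \<tau>) (bvec (Ib m)) = (\<lambda>d. \<alpha> powi m * \<mu> * bvec (Ib (\<epsilon> * m)) d)))"
proof (rule bexI[OF _ tau_Igrp[of s lam ww ks]], rule exI[of _ eps], rule conjI)
  show "eps \<in> {1, -1}" using eps_prop(2) by auto
next
  show "\<exists>\<alpha> \<mu> \<beta> :: complex. \<alpha> \<noteq> 0 \<and> \<mu> \<noteq> 0 \<and>
     (\<forall>m::int.
        (\<sigma> \<circ> tauL s lam ww ks) (bvec (Lb m)) =
          (\<lambda>d. of_int eps * \<alpha> powi m * bvec (Lb (eps * m)) d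
              + of_int m * \<alpha> powi m * \<beta> * bvec (Ib (eps * m)) d)
      \<and> (\<sigma> \<circ> tauL s lam ww ks) (bvec (Ib m)) = (\<lambda>d. \<alpha> powi m * \<mu> * bvec (Ib (eps * m)) d))"
  proof (rule exI[of _ alpha], rule exI[of _ "ee 0"], rule exI[of _ "DD 1 / alpha"], rule conjI[OF alpha_nz], rule conjI[OF mu_nz], rule allI, rule conjI)
  fix m
  show "(\<sigma> \<circ> tauL s lam ww ks) (bvec (Ib m)) = (\<lambda>d. alpha powi m * ee 0 * bvec (Ib (eps * m)) d)"
    using ee_form[of m] by (auto simp: tau_I Iform bvec_app)
  show "(\<sigma> \<circ> tauL s lam ww ks) (bvec (Lb m)) =
    (\<lambda>d. of_int eps * alpha powi m * bvec (Lb (eps * m)) d + of_int m * alpha powi m * (DD 1 / alpha) * bvec (Ib (eps * m)) d)"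
  proof
    fix d
    show "(\<sigma> \<circ> tauL s lam ww ks) (bvec (Lb m)) d =
      of_int eps * alpha powi m * bvec (Lb (eps * m)) d + of_int m * alpha powi m * (DD 1 / alpha) * bvec (Ib (eps * m)) d"
    proof (cases d)
      case (Lb j)
      then show ?thesis by (simp add: sigma_tau_L Iform Lform bvec_app cc_form)
    next
      case (Gb j)
      then show ?thesis using SL_even[of m] by (simp add: sigma_tau_L Iform bvec_app evenv_def)
    next
      case (Hb j)
      then show ?thesis using SL_even[of m] by (simp add: sigma_tau_L Iform bvec_app evenv_def)
    next
      case (Ib j)
      define k0 where "k0 = eps * j - m"
      have jk: "j = eps * (m + k0)" using eps_sq unfolding k0_def by (simp add: algebra_simps)
      have cond: "(Ib j = Ib (eps * (m + k))) = (k = k0)" for k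
      proof -
        have "(j = eps * (m + k)) = (eps * j = m + k)"
          using eps_prop(2) by auto
        then show ?thesis unfolding k0_def by (simp only: sbasis.inject) linarith
      qed
      have cond2: "(j = eps * (m + k)) = (k = k0)" for k
        using cond[of k] by simp
      have "(\<Sum>k\<in>KK. (ww k * - of_int (m - k)) * SI (m + k) (Ib j)) =
            (\<Sum>k\<in>KK. if k = k0 then (ww k0 * - of_int (m - k0)) * ee (m + k0) else 0)"
        by (rule sum.cong) (auto simp: Iform cond2)
      also have "\<dots> = (if k0 \<in> KK then (ww k0 * - of_int (m - k0)) * ee (m + k0) else 0)"
        using KK_fin by (simp add: sum.delta)
      finally have S: "(\<Sum>k\<in>KK. (ww k * - of_int (m - k)) * SI (m + k) (Ib j)) =
          (if k0 \<in> KK then (ww k0 * - of_int (m - k0)) * ee (m + k0) else 0)" .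
      have LHS: "(\<sigma> \<circ> tauL s lam ww ks) (bvec (Lb m)) d = FF m j + (if k0 \<in> KK then (ww k0 * - of_int (m - k0)) * ee (m + k0) else 0)"
        using S by (simp add: sigma_tau_L Ib FF_def)
      show ?thesis
      proof (cases "k0 = 0")
        case True
        then have j: "j = eps * m" using jk by simp
        have "0 \<notin> KK" using F00 by (simp add: KK_def)
        then show ?thesis using LHS True j D_form by (simp add: Ib bvec_app DD_def)
      next
        case False
        then have j: "j \<noteq> eps * m" using jk eps_prop(2) by auto
        have RHS: "of_int eps * alpha powi m * bvec (Lb (eps * m)) d + of_int m * alpha powi m * (DD 1 / alpha) * bvec (Ib (eps * m)) d = 0"
          using j by (simp add: Ib bvec_app)
        have fo: "FF m j * of_int k0 = - (alpha powi m) * of_int (m - k0) * FF 0 (eps * k0)"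
          using Foff[OF False, of m] jk by simp
        show ?thesis
        proof (cases "k0 \<in> KK")
          case True
          have ee: "ee (m + k0) = alpha powi m * alpha powi k0 * ee 0"
            using ee_form[of "m + k0"] alpha_nz by (simp add: power_int_add)
          have "FF m j + ww k0 * - of_int (m - k0) * ee (m + k0) = 0"
            using fo False alpha_nz mu_nz unfolding ee ww_def
            apply (simp add: field_simps)
            apply (drule arg_cong[where f="\<lambda>z. ee 0 * alpha powi k0 * z"])
            by (simp add: algebra_simps)
          then show ?thesis using LHS True RHS by simp
        next
          case kn: False
          then have "FF 0 (eps * k0) = 0" by (simp add: KK_def)
          then have "FF m j = 0" using fo False by simp
          then show ?thesis using LHS kn RHS by simp
        qed
      qed
    qed
  qed
  qed
qed

end


theorem lemma3p2:
  fixes s lam :: complex and \<sigma> :: "svec \<Rightarrow> svec"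
  assumes "s = 0 \<or> s = 1/2"
    and "is_aut s lam \<sigma>"
  shows "\<exists>\<tau>\<in>Igrp s lam. \<exists>\<epsilon>::int. \<epsilon> \<in> {1, -1} \<and> (\<exists>\<alpha> \<mu> \<beta> :: complex. \<alpha> \<noteq> 0 \<and> \<mu> \<noteq> 0 \<and>
     (\<forall>m::int.
        (\<sigma> \<circ> \<tau>) (bvec (Lb m)) =
          (\<lambda>d. of_int \<epsilon> * \<alpha> powi m * bvec (Lb (\<epsilon> * m)) d
              + of_int m * \<alpha> powi m * \<beta> * bvec (Ib (\<epsilon> * m)) d)
      \<and> (\<sigma> \<circ> \<tau>) (bvec (Ib m)) = (\<lambda>d. \<alpha> powi m * \<mu> * bvec (Ib (\<epsilon> * m)) d)))"
proof -
  interpret autL s lam \<sigma> by unfold_locales (rule assms(2))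
  show ?thesis by (rule main)
qed

end
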